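(* Let $F$ be a positive integer. The directed graph $\mathrm{G}^K(\mathcal{I}(F))$ is a tree with root $\hat x\in\{0,1\}^F$, the vector whose first $\lceil\frac{F+1}{2}\rceil-1$ entries are $1$, next $F-\lceil\frac{F+1}{2}\rceil$ entries are $0$, and last entry is $1$. Moreover, if $x=\mathcal{K}(S,F+1)$ for some $S\in\mathcal{I}(F)$, then the children of $x$ in $\mathrm{G}^K(\mathcal{I}(F))$ are exactly the vectors $x+\mathrm{e}_n-\mathrm{e}_{F-n}$ where $n\in\{1,\dots,F\}$ ranges over the indices satisfying: (1) $x_n=0$; (2) $x_k+x_j\ge 1$ for all positive integers $k,j$ with $k+j=n$; (3) $\frac F2<n<F$; (4) $x_{2n-F}=1$; (5) $3n\neq 2F$; (6) $4n\neq 3F$; (7) $n>F-m_x$, where $m_x=\min\{j: x_j=0\}$ if some $x_j=0$ and $m_x=F+1$ otherwise.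
   Context: A numerical semigroup is a subset $S\subseteq\mathbb{N}$ closed under addition, containing $0$, with $\mathbb{N}\setminus S$ finite; its Frobenius number is the largest integer not in $S$; its multiplicity $\mathrm{m}(S)$ is its smallest positive element. A numerical semigroup is irreducible if it cannot be written as the intersection of two numerical semigroups properly containing it; $\mathcal{I}(F)$ is the set of irreducible numerical semigroups with Frobenius number $F$. For $n\in S\setminus\{0\}$ and $i=1,\dots,n-1$, let $w_i$ be the least element of $S$ congruent to $i$ modulo $n$; the Kunz-coordinates vector of $S$ with respect to $n$ is $\mathcal{K}(S,n)=(x_1,\dots,x_{n-1})$ with $x_i=\frac{w_i-i}{n}$. For $S$ with Frobenius number $F$, $\mathcal{K}(S,F+1)\in\{0,1\}^F$ and $x_i=1$ iff $i\notin S$. $\mathrm{e}_i\in\mathbb{Z}^F$ is the $i$th unit vector. The directed graph $\mathrm{G}^K(\mathcal{I}(F))$ has vertex set $\{\mathcal{K}(S,F+1): S\in\mathcal{I}(F)\}$, and $(x,y)$ is an edge iff $m=\min\{i: x_i=0\}$ exists, $m<\frac F2$, and $y=x+\mathrm{e}_m-\mathrm{e}_{F-m}$. A directed graph is a tree with root $r$ if for every vertex $v\ne r$ there is a unique path of distinct edges from $v$ to $r$; if $(v,w)$ is an edge, $v$ is a child of $w$. *)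

theory Defs
  imports Complex_Main
begin

definition numerical_semigroup :: "nat set \<Rightarrow> bool" where
  "numerical_semigroup S \<longleftrightarrow>
     0 \<in> S \<and> (\<forall>a\<in>S. \<forall>b\<in>S. a + b \<in> S) \<and> finite (UNIV - S)"

definition frobenius :: "nat set \<Rightarrow> int" where
  "frobenius S = (if S = UNIV then -1 else int (Max (UNIV - S)))"

definition irreducible_ns :: "nat set \<Rightarrow> bool" where
  "irreducible_ns S \<longleftrightarrow> numerical_semigroup S \<and>
     \<not> (\<exists>T1 T2. numerical_semigroup T1 \<and> numerical_semigroup T2 \<and>
                S \<subset> T1 \<and> S \<subset> T2 \<and> S = T1 \<inter> T2)"

definition Irr :: "nat \<Rightarrow> nat set set" where
  "Irr F = {S. irreducible_ns S \<and> frobenius S = int F}"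

definition apery_w :: "nat set \<Rightarrow> nat \<Rightarrow> nat \<Rightarrow> nat" where
  "apery_w S n i = (LEAST w. w \<in> S \<and> w mod n = i mod n)"

text \<open>Vectors in Z^(n-1) are represented as functions nat => int, indexed by 1..n-1
  and equal to 0 outside this range.\<close>
definition kunz :: "nat set \<Rightarrow> nat \<Rightarrow> (nat \<Rightarrow> int)" where
  "kunz S n = (\<lambda>i. if 1 \<le> i \<and> i < n then int ((apery_w S n i - i) div n) else 0)"

definition unitv :: "nat \<Rightarrow> (nat \<Rightarrow> int)" where
  "unitv i = (\<lambda>j. if j = i then 1 else 0)"

definition vmove :: "(nat \<Rightarrow> int) \<Rightarrow> nat \<Rightarrow> nat \<Rightarrow> (nat \<Rightarrow> int)" where
  "vmove x a b = (\<lambda>j. x j + unitv a j - unitv b j)"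

definition GK_vertices :: "nat \<Rightarrow> (nat \<Rightarrow> int) set" where
  "GK_vertices F = (\<lambda>S. kunz S (F + 1)) ` Irr F"

definition GK_edges :: "nat \<Rightarrow> ((nat \<Rightarrow> int) \<times> (nat \<Rightarrow> int)) set" where
  "GK_edges F = {(x, y). x \<in> GK_vertices F \<and> y \<in> GK_vertices F \<and>
      (\<exists>i\<in>{1..F}. x i = 0) \<and>
      (let m = (LEAST i. i \<in> {1..F} \<and> x i = 0) in
         real m < real F / 2 \<and> y = vmove x m (F - m))}"

definition is_path :: "('a \<times> 'a) set \<Rightarrow> 'a \<Rightarrow> 'a \<Rightarrow> 'a list \<Rightarrow> bool" where
  "is_path E v r p \<longleftrightarrow> p \<noteq> [] \<and> hd p = v \<and> last p = r \<and>
     set (zip p (tl p)) \<subseteq> E \<and> distinct (zip p (tl p))"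

definition is_tree_with_root :: "'a set \<Rightarrow> ('a \<times> 'a) set \<Rightarrow> 'a \<Rightarrow> bool" where
  "is_tree_with_root V E r \<longleftrightarrow> r \<in> V \<and>
     (\<forall>v\<in>V. v \<noteq> r \<longrightarrow> (\<exists>!p. is_path E v r p))"

definition xhat :: "nat \<Rightarrow> (nat \<Rightarrow> int)" where
  "xhat F = (let c = nat \<lceil>real (F + 1) / 2\<rceil> in
     (\<lambda>i. if (1 \<le> i \<and> i \<le> c - 1) \<or> i = F then 1 else 0))"

definition mx :: "nat \<Rightarrow> (nat \<Rightarrow> int) \<Rightarrow> nat" where
  "mx F x = (if \<exists>j\<in>{1..F}. x j = 0 then (LEAST j. j \<in> {1..F} \<and> x j = 0) else F + 1)"

end

theory Submission
  imports Defs
begin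



lemma path_unique:
  assumes fn: "\<And>a b c. (a,b) \<in> E \<Longrightarrow> (a,c) \<in> E \<Longrightarrow> b = c"
    and nor: "\<And>b. (r,b) \<notin> E"
  shows "is_path E v r p \<Longrightarrow> is_path E v r q \<Longrightarrow> p = q"
proof (induction p arbitrary: v q)
  case Nil
  then show ?case by (simp add: is_path_def)
next
  case (Cons a p')
  show ?case
  proof (cases p')
    case Nil
    with Cons.prems have vr: "a = v" "v = r" by (auto simp: is_path_def)
    show ?thesis
    proof (cases q)
      case Nil then show ?thesis using Cons.prems by (simp add: is_path_def)
    next
      case (Cons c q')
      show ?thesis
      proof (cases q')
        case Nil then show ?thesis using Cons \<open>q = c # q'\<close> Cons.prems vr \<open>p' = []\<close> by (simp add: is_path_def)
      next
        case (Cons d q'')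
        then have "(v,d) \<in> E" using Cons.prems \<open>q = c # q'\<close> by (auto simp: is_path_def)
        then show ?thesis using nor vr by simp
      qed
    qed
  next
    case (Cons b p'')
    with Cons.prems have vb: "(v,b) \<in> E" and av: "a = v" by (auto simp: is_path_def)
    have vr: "v \<noteq> r" using vb nor by auto
    show ?thesis
    proof (cases q)
      case Nil then show ?thesis using Cons.prems by (simp add: is_path_def)
    next
      case (Cons c q')
      show ?thesis
      proof (cases q')
        case Nil then show ?thesis using \<open>q = c # q'\<close> Cons.prems(2) vr by (auto simp add: is_path_def)
      next
        case (Cons d q'')
        then have "(v,d) \<in> E" using Cons.prems \<open>q = c # q'\<close> by (auto simp: is_path_def)
        with vb fn have bd: "b = d" by blast
        have p1: "is_path E b r p'" using Cons.prems(1) \<open>p' = b # p''\<close>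
          by (auto simp: is_path_def)
        have p2: "is_path E b r q'" using Cons.prems(2) \<open>q = c # q'\<close> \<open>q' = d # q''\<close> bd
          by (auto simp: is_path_def)
        have "p' = q'" using Cons.IH[OF p1 p2] .
        moreover have "c = a" using Cons.prems \<open>q = c # q'\<close> av by (simp add: is_path_def)
        ultimately show ?thesis using \<open>q = c # q'\<close> by simp
      qed
    qed
  qed
qed

lemma path_exists:
  assumes "r \<in> V" "E \<subseteq> V \<times> V"
    and inc: "\<And>a b. (a,b) \<in> E \<Longrightarrow> f a < (f b :: nat)"
    and bd: "\<And>a. a \<in> V \<Longrightarrow> f a \<le> B"
    and out: "\<And>v. v \<in> V \<Longrightarrow> v \<noteq> r \<Longrightarrow> \<exists>w. (v,w) \<in> E"
  shows "v \<in> V \<Longrightarrow> \<exists>p. is_path E v r p \<and> (\<forall>x\<in>set p. f v \<le> f x)"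
proof (induction "B - f v" arbitrary: v rule: less_induct)
  case less
  show ?case
  proof (cases "v = r")
    case True
    then show ?thesis by (rule_tac x="[r]" in exI) (simp add: is_path_def)
  next
    case False
    then obtain w where vw: "(v,w) \<in> E" using out less.prems by blast
    then have wV: "w \<in> V" using assms(2) by auto
    have fvw: "f v < f w" using inc vw by auto
    have "B - f w < B - f v" using fvw bd[OF wV] by simp
    then obtain p where p: "is_path E w r p" and pf: "\<forall>x\<in>set p. f w \<le> f x"
      using less.hyps wV by blast
    then obtain p' where pp: "p = w # p'" by (cases p) (auto simp: is_path_def)
    have notin: "(v, y) \<notin> set (zip p (tl p))" for y
    proof
      assume "(v, y) \<in> set (zip p (tl p))"
      then have "v \<in> set p" by (meson in_set_zipE)
      then show False using pf fvw by fastforce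
    qed
    have "is_path E v r (v # p)"
      using p pp vw notin by (auto simp: is_path_def)
    moreover have "\<forall>x\<in>set (v#p). f v \<le> f x" using pf fvw by auto
    ultimately show ?thesis by blast
  qed
qed

lemma tree_generic:
  assumes "r \<in> V" "E \<subseteq> V \<times> V"
    and fn: "\<And>a b c. (a,b) \<in> E \<Longrightarrow> (a,c) \<in> E \<Longrightarrow> b = c"
    and nor: "\<And>b. (r,b) \<notin> E"
    and inc: "\<And>a b. (a,b) \<in> E \<Longrightarrow> f a < (f b :: nat)"
    and bd: "\<And>a. a \<in> V \<Longrightarrow> f a \<le> B"
    and out: "\<And>v. v \<in> V \<Longrightarrow> v \<noteq> r \<Longrightarrow> \<exists>w. (v,w) \<in> E"
  shows "is_tree_with_root V E r"
  unfolding is_tree_with_root_def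
proof (intro conjI ballI impI)
  show "r \<in> V" by fact
  fix v assume "v \<in> V" "v \<noteq> r"
  then obtain p where "is_path E v r p"
    using path_exists[of r V E f B v] assms by blast
  then show "\<exists>!p. is_path E v r p"
    using path_unique[of E r v] fn nor by blast
qed




definition good :: "nat \<Rightarrow> nat set \<Rightarrow> bool" where
  "good F S \<longleftrightarrow> 0 \<in> S \<and> (\<forall>a\<in>S. \<forall>b\<in>S. a + b \<in> S) \<and> F \<notin> S \<and> (\<forall>i>F. i \<in> S) \<and>
     (\<forall>h. h \<notin> S \<longrightarrow> h \<noteq> F \<longrightarrow> 2*h \<noteq> F \<longrightarrow> F - h \<in> S)"

definition chi :: "nat \<Rightarrow> nat set \<Rightarrow> nat \<Rightarrow> int" where
  "chi F S = (\<lambda>i. if 1 \<le> i \<and> i \<le> F then (if i \<in> S then 0 else 1) else 0)"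

lemma gapF: "\<forall>i>F. i \<in> S \<Longrightarrow> x \<notin> S \<Longrightarrow> x \<le> (F::nat)"
  using leI by blast

lemma frob_iff:
  assumes "numerical_semigroup S"
  shows "frobenius S = int F \<longleftrightarrow> F \<notin> S \<and> (\<forall>i>F. i \<in> S)"
proof (cases "S = UNIV")
  case True then show ?thesis by (simp add: frobenius_def)
next
  case False
  have fin: "finite (UNIV - S)" using assms by (simp add: numerical_semigroup_def)
  have ne: "UNIV - S \<noteq> {}" using False by auto
  show ?thesis
  proof
    assume "frobenius S = int F"
    then have M: "Max (UNIV - S) = F" using False by (simp add: frobenius_def)
    have "F \<in> UNIV - S" using Max_in[OF fin ne] M by simp
    moreover have "i \<in> S" if "i > F" for i
    proof (rule ccontr)
      assume "i \<notin> S"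
      then have "i \<le> Max (UNIV - S)" using fin by simp
      then show False using M that by simp
    qed
    ultimately show "F \<notin> S \<and> (\<forall>i>F. i \<in> S)" by auto
  next
    assume a: "F \<notin> S \<and> (\<forall>i>F. i \<in> S)"
    have "Max (UNIV - S) = F"
      by (rule Max_eqI) (use fin a gapF in \<open>auto\<close>)
    then show "frobenius S = int F" using False by (simp add: frobenius_def)
  qed
qed

lemma ns_intro:
  assumes "0 \<in> S" "\<forall>a\<in>S. \<forall>b\<in>S. a + b \<in> S" "\<forall>i>F. i \<in> S"
  shows "numerical_semigroup S"
proof -
  have "UNIV - S \<subseteq> {..F}" using assms(3) gapF by blast
  then have "finite (UNIV - S)" using finite_subset by blast
  then show ?thesis using assms by (simp add: numerical_semigroup_def)
qed

lemma good_ns: "good F S \<Longrightarrow> numerical_semigroup S"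
  using ns_intro[of S F] by (simp add: good_def)

lemma good_irr:
  assumes g: "good F S"
  shows "irreducible_ns S"
proof -
  have key: "F \<in> T" if T: "numerical_semigroup T" "S \<subset> T" for T
  proof -
    obtain h where h: "h \<in> T" "h \<notin> S" using T(2) by blast
    have hF: "h \<le> F" using g h(2) gapF unfolding good_def by blast
    have Tc: "\<forall>a\<in>T. \<forall>b\<in>T. a + b \<in> T" using T(1) by (simp add: numerical_semigroup_def)
    show ?thesis
    proof (cases "h = F")
      case True then show ?thesis using h by simp
    next
      case hne: False
      show ?thesis
      proof (cases "2*h = F")
        case True
        then have "h + h = F" by simp
        then show ?thesis using Tc h(1) by metis
      next
        case False
        then have "F - h \<in> S" using g h(2) hne by (simp add: good_def)
        then have "F - h \<in> T" using T(2) by blast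
        then have "h + (F - h) \<in> T" using Tc h(1) by blast
        then show ?thesis using hF by simp
      qed
    qed
  qed
  show ?thesis unfolding irreducible_ns_def
  proof (intro conjI notI)
    show "numerical_semigroup S" using good_ns[OF g] .
  next
    assume "\<exists>T1 T2. numerical_semigroup T1 \<and> numerical_semigroup T2 \<and> S \<subset> T1 \<and> S \<subset> T2 \<and> S = T1 \<inter> T2"
    then obtain T1 T2 where "numerical_semigroup T1" "numerical_semigroup T2" "S \<subset> T1" "S \<subset> T2" "S = T1 \<inter> T2"
      by blast
    then have "F \<in> S" using key by blast
    then show False using g by (simp add: good_def)
  qed
qed

lemma irr_good:
  assumes irr: "irreducible_ns S" and fr: "F \<notin> S" "\<forall>i>F. i \<in> S" and F0: "0 < F"
  shows "good F S"
proof -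
  have ns: "numerical_semigroup S" using irr by (simp add: irreducible_ns_def)
  have z: "0 \<in> S" and cl: "\<forall>a\<in>S. \<forall>b\<in>S. a + b \<in> S" using ns by (auto simp: numerical_semigroup_def)
  define B where "B = {h. h \<notin> S \<and> h \<noteq> F \<and> 2*h \<noteq> F \<and> F - h \<notin> S}"
  have "B = {}"
  proof (rule ccontr)
    assume Bne: "B \<noteq> {}"
    have "B \<subseteq> {..F}" using fr(2) gapF unfolding B_def by blast
    then have finB: "finite B" using finite_subset by blast
    define h where "h = Max B"
    have hB: "h \<in> B" using Max_in[OF finB Bne] h_def by simp
    have hmax: "\<And>k. k \<in> B \<Longrightarrow> k \<le> h" using finB h_def by simp
    have hS: "h \<notin> S" "h \<noteq> F" "2*h \<noteq> F" "F - h \<notin> S" using hB by (auto simp: B_def)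
    have hF: "h < F" using hS fr(2) by (meson linorder_neqE_nat)
    have h0: "h \<noteq> 0" using hS(1) z by metis
    have "F - h \<in> B" using hS hF h0 by (auto simp: B_def)
    then have "F - h \<le> h" using hmax by blast
    then have h2: "F < 2*h" using hS(3) by linarith
    define T1 where "T1 = insert h S"
    define T2 where "T2 = insert F S"
    have cl1: "\<forall>a\<in>T1. \<forall>b\<in>T1. a + b \<in> T1"
    proof (intro ballI)
      have one: "h + b \<in> T1" if b: "b \<in> S" for b
      proof (cases "b = 0")
        case True then show ?thesis by (simp add: T1_def)
      next
        case b0: False
        consider "h + b > F" | "h + b = F" | "h + b < F" by linarith
        then show ?thesis
        proof cases
          case 1 then show ?thesis using fr(2) by (simp add: T1_def)
        next
          case 2 then have "b = F - h" by simp
          then show ?thesis using b hS by simp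
        next
          case 3
          show ?thesis
          proof (rule ccontr)
            assume nT: "h + b \<notin> T1"
            have "F - (h + b) \<notin> S"
            proof
              assume "F - (h + b) \<in> S"
              then have "F - (h+b) + b \<in> S" using cl b by blast
              then show False using 3 hS by (simp add: add.commute)
            qed
            then have "h + b \<in> B" using nT 3 h2 by (auto simp: B_def T1_def)
            then show False using hmax b0 by fastforce
          qed
        qed
      qed
      fix a b assume ab: "a \<in> T1" "b \<in> T1"
      show "a + b \<in> T1"
      proof (cases "a = h")
        case True
        show ?thesis
        proof (cases "b = h")
          case True then show ?thesis using \<open>a = h\<close> h2 fr(2) by (simp add: T1_def)
        next
          case False then show ?thesis using ab one \<open>a = h\<close> by (auto simp: T1_def)
        qed
      next
        case False
        show ?thesis
        proof (cases "b = h")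
          case True then show ?thesis using ab one \<open>a \<noteq> h\<close> by (auto simp: T1_def add.commute)
        next
          case False then show ?thesis using ab cl \<open>a \<noteq> h\<close> by (auto simp: T1_def)
        qed
      qed
    qed
    have cl2: "\<forall>a\<in>T2. \<forall>b\<in>T2. a + b \<in> T2"
    proof (intro ballI)
      have one: "F + b \<in> T2" if "b \<in> S" for b
        using fr(2) by (cases "b = 0") (auto simp: T2_def)
      fix a b assume ab: "a \<in> T2" "b \<in> T2"
      show "a + b \<in> T2"
      proof (cases "a = F")
        case True
        show ?thesis
        proof (cases "b = F")
          case True then show ?thesis using \<open>a = F\<close> F0 fr(2) by (simp add: T2_def)
        next
          case False then show ?thesis using ab one \<open>a = F\<close> by (auto simp: T2_def)
        qed
      next
        case False
        show ?thesis
        proof (cases "b = F")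
          case True then show ?thesis using ab one[of a] \<open>a \<noteq> F\<close> by (auto simp: T2_def add.commute)
        next
          case False then show ?thesis using ab cl \<open>a \<noteq> F\<close> by (auto simp: T2_def)
        qed
      qed
    qed
    have ns1: "numerical_semigroup T1"
      using ns_intro[of T1 F] cl1 z fr by (auto simp: T1_def)
    have ns2: "numerical_semigroup T2"
      using ns_intro[of T2 F] cl2 z fr by (auto simp: T2_def)
    have "S = T1 \<inter> T2" using hS by (auto simp: T1_def T2_def)
    moreover have "S \<subset> T1" "S \<subset> T2" using hS fr by (auto simp: T1_def T2_def)
    ultimately show False using irr ns1 ns2 unfolding irreducible_ns_def by blast
  qed
  then have "\<forall>h. h \<notin> S \<longrightarrow> h \<noteq> F \<longrightarrow> 2*h \<noteq> F \<longrightarrow> F - h \<in> S" by (auto simp: B_def)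
  then show ?thesis using z cl fr by (simp add: good_def)
qed

lemma Irr_iff: "0 < F \<Longrightarrow> S \<in> Irr F \<longleftrightarrow> good F S"
proof
  assume F0: "0 < F" and "S \<in> Irr F"
  then have i: "irreducible_ns S" and f: "frobenius S = int F" by (auto simp: Irr_def)
  have "numerical_semigroup S" using i by (simp add: irreducible_ns_def)
  then have "F \<notin> S \<and> (\<forall>i>F. i \<in> S)" using f frob_iff by blast
  then show "good F S" using irr_good[OF i _ _ F0] by blast
next
  assume "0 < F" and g: "good F S"
  have "frobenius S = int F" using frob_iff[OF good_ns[OF g]] g by (simp add: good_def)
  then show "S \<in> Irr F" using good_irr[OF g] by (simp add: Irr_def)
qed

lemma kunz_chi:
  assumes "\<forall>i>F. i \<in> S"
  shows "kunz S (F+1) = chi F S"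
proof
  fix i
  show "kunz S (F+1) i = chi F S i"
  proof (cases "1 \<le> i \<and> i \<le> F")
    case False then show ?thesis by (auto simp: kunz_def chi_def)
  next
    case True
    then have im: "i mod (F+1) = i" by simp
    show ?thesis
    proof (cases "i \<in> S")
      case True
      have "apery_w S (F+1) i = i"
        unfolding apery_w_def
      proof (rule Least_equality)
        show "i \<in> S \<and> i mod (F + 1) = i mod (F + 1)" using True by simp
      next
        fix y assume "y \<in> S \<and> y mod (F + 1) = i mod (F + 1)"
        then have "y mod (F+1) = i" using im by simp
        then show "i \<le> y" by (metis mod_less_eq_dividend)
      qed
      then show ?thesis using True \<open>1 \<le> i \<and> i \<le> F\<close> by (simp add: kunz_def chi_def)
    next
      case False
      have "apery_w S (F+1) i = i + (F+1)"
        unfolding apery_w_def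
      proof (rule Least_equality)
        have "(i + (F+1)) mod (F + 1) = i mod (F + 1)" by (rule mod_add_self2)
        then show "i + (F+1) \<in> S \<and> (i + (F+1)) mod (F + 1) = i mod (F + 1)" using assms by simp
      next
        fix y assume y: "y \<in> S \<and> y mod (F + 1) = i mod (F + 1)"
        then have ym: "y mod (F+1) = i" using im by simp
        have yd: "y = (y div (F+1)) * (F+1) + i" using ym by (metis div_mult_mod_eq)
        have "y div (F+1) \<noteq> 0"
        proof
          assume "y div (F+1) = 0"
          then have "y = i" using yd by simp
          then show False using y False by simp
        qed
        then have "1 * (F + 1) \<le> (y div (F+1)) * (F+1)" by (intro mult_right_mono) auto
        then have "F + 1 \<le> (y div (F+1)) * (F+1)" by simp
        then show "i + (F+1) \<le> y" using yd by (metis add.commute add_le_mono1)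
      qed
      then show ?thesis using False \<open>1 \<le> i \<and> i \<le> F\<close> by (simp add: kunz_def chi_def)
    qed
  qed
qed

lemma chi_inj:
  assumes "0 \<in> A" "0 \<in> B" "\<forall>i>F. i \<in> A" "\<forall>i>F. i \<in> B" "chi F A = chi F B"
  shows "A = B"
proof (rule set_eqI)
  fix i
  show "i \<in> A \<longleftrightarrow> i \<in> B"
  proof (cases "1 \<le> i \<and> i \<le> F")
    case True
    have "chi F A i = chi F B i" using assms(5) by simp
    then show ?thesis using True by (auto simp: chi_def split: if_splits)
  next
    case False
    then have "i = 0 \<or> i > F" by auto
    then show ?thesis using assms by auto
  qed
qed




definition msg :: "nat set \<Rightarrow> nat" where "msg S = (LEAST i. 0 < i \<and> i \<in> S)"

definition root :: "nat \<Rightarrow> nat set" where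
  "root F = {i. i = 0 \<or> ((F+2) div 2 \<le> i \<and> i \<noteq> F)}"

lemma msg_props:
  assumes "\<forall>i>F. i \<in> S"
  shows "0 < msg S" "msg S \<in> S" "msg S \<le> F+1" "\<And>i. 0 < i \<Longrightarrow> i \<in> S \<Longrightarrow> msg S \<le> i"
proof -
  have ex: "0 < F+1 \<and> F+1 \<in> S" using assms by simp
  show "0 < msg S" "msg S \<in> S" using LeastI[of "\<lambda>i. 0 < i \<and> i \<in> S", OF ex] by (auto simp: msg_def)
  show "msg S \<le> F+1" using Least_le[of "\<lambda>i. 0 < i \<and> i \<in> S", OF ex] by (simp add: msg_def)
  show "\<And>i. 0 < i \<Longrightarrow> i \<in> S \<Longrightarrow> msg S \<le> i" by (simp add: msg_def Least_le)
qed

lemma chi_zero_iff: "1 \<le> i \<Longrightarrow> i \<le> F \<Longrightarrow> chi F S i = 0 \<longleftrightarrow> i \<in> S"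
  by (simp add: chi_def)

lemma ex_zero:
  assumes "\<forall>i>F. i \<in> S"
  shows "(\<exists>j\<in>{1..F}. chi F S j = 0) \<longleftrightarrow> msg S \<le> F"
proof
  assume "\<exists>j\<in>{1..F}. chi F S j = 0"
  then obtain j where "1 \<le> j" "j \<le> F" "j \<in> S" using chi_zero_iff by auto
  then show "msg S \<le> F" using msg_props(4)[OF assms, of j] by simp
next
  assume "msg S \<le> F"
  moreover have "1 \<le> msg S" "msg S \<in> S" using msg_props[OF assms] by auto
  ultimately show "\<exists>j\<in>{1..F}. chi F S j = 0" using chi_zero_iff by auto
qed

lemma least_zero:
  assumes "\<forall>i>F. i \<in> S" "msg S \<le> F"
  shows "(LEAST i. i \<in> {1..F} \<and> chi F S i = 0) = msg S"
proof (rule Least_equality)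
  have "1 \<le> msg S" "msg S \<in> S" using msg_props[OF assms(1)] by auto
  then show "msg S \<in> {1..F} \<and> chi F S (msg S) = 0" using assms(2) chi_zero_iff by auto
next
  fix y assume "y \<in> {1..F} \<and> chi F S y = 0"
  then have "0 < y" "y \<in> S" using chi_zero_iff by auto
  then show "msg S \<le> y" using msg_props(4)[OF assms(1)] by simp
qed

lemma mx_chi:
  assumes "\<forall>i>F. i \<in> S"
  shows "mx F (chi F S) = msg S"
proof (cases "msg S \<le> F")
  case True then show ?thesis using ex_zero[OF assms] least_zero[OF assms] by (simp add: mx_def)
next
  case False
  then have "msg S = F + 1" using msg_props(3)[OF assms] by simp
  then show ?thesis using ex_zero[OF assms] False by (simp add: mx_def)
qed

lemma mx_le: "mx F x \<le> F + 1"
proof (cases "\<exists>j\<in>{1..F}. x j = 0")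
  case True
  then obtain j where j: "j \<in> {1..F}" "x j = 0" by blast
  then have "(LEAST i. i \<in> {1..F} \<and> x i = 0) \<le> j" by (simp add: Least_le)
  then show ?thesis using True j by (simp add: mx_def)
next
  case False then show ?thesis by (simp add: mx_def)
qed

lemma ceil_half: "nat \<lceil>real (F + 1) / 2\<rceil> = (F+2) div 2"
proof -
  define c where "c = (F+2) div 2"
  have c1: "2*c \<le> F+2" "F+1 \<le> 2*c" unfolding c_def by auto
  have "\<lceil>real (F + 1) / 2\<rceil> = int c"
  proof (rule ceiling_unique)
    show "real (F + 1) / 2 \<le> of_int (int c)" using c1 by simp
    show "of_int (int c) - 1 < real (F + 1) / 2" using c1 by simp
  qed
  then show ?thesis unfolding c_def by simp
qed

lemma xhat_root: assumes F0: "0 < F" shows "xhat F = chi F (root F)"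
proof
  fix i
  have c: "(F+2) div 2 \<le> F + 1" by simp
  show "xhat F i = chi F (root F) i"
    unfolding xhat_def ceil_half Let_def chi_def root_def
    using c F0 by auto
qed

lemma root_good:
  assumes F0: "0 < F"
  shows "good F (root F)"
proof -
  define c where "c = (F+2) div 2"
  have c1: "2*c \<le> F+2" "F+1 \<le> 2*c" "1 \<le> c" unfolding c_def by auto
  have R: "root F = {i. i = 0 \<or> (c \<le> i \<and> i \<noteq> F)}" by (simp add: root_def c_def)
  have cl: "\<forall>a\<in>root F. \<forall>b\<in>root F. a + b \<in> root F"
  proof (intro ballI)
    fix a b assume "a \<in> root F" "b \<in> root F"
    then show "a + b \<in> root F" unfolding R using c1 by auto
  qed
  have gt: "\<forall>i>F. i \<in> root F" unfolding R using c1 by auto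
  have sy: "\<forall>h. h \<notin> root F \<longrightarrow> h \<noteq> F \<longrightarrow> 2*h \<noteq> F \<longrightarrow> F - h \<in> root F"
  proof (intro allI impI)
    fix h assume h: "h \<notin> root F" "h \<noteq> F" "2*h \<noteq> F"
    then have "1 \<le> h" "h < c" unfolding R by auto
    then show "F - h \<in> root F" unfolding R using c1 h(3) by auto
  qed
  have "0 \<in> root F" "F \<notin> root F" unfolding R using F0 by auto
  then show ?thesis using cl gt sy unfolding good_def by blast
qed

lemma lemA:
  assumes g: "good F S" and m: "m = msg S" and m2: "2*m < F"
  defines "S' \<equiv> insert (F - m) (S - {m})"
  shows "good F S' \<and> m < msg S'"
proof -
  have gt: "\<forall>i>F. i \<in> S" and z: "0 \<in> S" and cl: "\<forall>a\<in>S. \<forall>b\<in>S. a + b \<in> S"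
    and FS: "F \<notin> S" and sy: "\<forall>h. h \<notin> S \<longrightarrow> h \<noteq> F \<longrightarrow> 2*h \<noteq> F \<longrightarrow> F - h \<in> S"
    using g by (auto simp: good_def)
  have m0: "0 < m" and mS: "m \<in> S" and mmin: "\<And>i. 0 < i \<Longrightarrow> i \<in> S \<Longrightarrow> m \<le> i"
    using msg_props[OF gt] m by auto
  have pos: "\<And>b. b \<in> S - {m} \<Longrightarrow> b = 0 \<or> m < b"
    using mmin by (metis DiffE insertCI le_neq_implies_less neq0_conv)
  have cl': "a + b \<in> S'" if "a \<in> S'" "b \<in> S'" for a b
  proof -
    have one: "(F - m) + b \<in> S'" if "b \<in> S - {m}" for b
    proof (cases "b = 0")
      case True then show ?thesis by (simp add: S'_def)
    next
      case False then have "m < b" using pos that by blast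
      then have "F < F - m + b" using m2 by linarith
      then show ?thesis using gt m2 by (auto simp: S'_def)
    qed
    show ?thesis
    proof (cases "a = F - m")
      case True
      show ?thesis
      proof (cases "b = F - m")
        case True
        have "F < (F - m) + (F - m)" using m2 by linarith
        then show ?thesis using \<open>a = F - m\<close> True gt m2 by (auto simp: S'_def)
      next
        case False then show ?thesis using one \<open>a = F - m\<close> that by (auto simp: S'_def)
      qed
    next
      case False
      show ?thesis
      proof (cases "b = F - m")
        case True then show ?thesis using one[of a] False that by (auto simp: S'_def add.commute)
      next
        case False
        then have ab: "a \<in> S - {m}" "b \<in> S - {m}" using that \<open>a \<noteq> F - m\<close> by (auto simp: S'_def)
        have "a + b \<in> S" using cl ab by blast
        moreover have "a + b \<noteq> m"
        proof
          assume am: "a + b = m"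
          from pos[OF ab(1)] pos[OF ab(2)] show False using am ab by auto
        qed
        ultimately show ?thesis by (simp add: S'_def)
      qed
    qed
  qed
  have z': "0 \<in> S'" using z m0 by (simp add: S'_def)
  have FS': "F \<notin> S'" using FS m0 m2 by (simp add: S'_def)
  have gt': "\<forall>i>F. i \<in> S'" using gt m2 by (auto simp: S'_def)
  have sy': "\<forall>h. h \<notin> S' \<longrightarrow> h \<noteq> F \<longrightarrow> 2*h \<noteq> F \<longrightarrow> F - h \<in> S'"
  proof (intro allI impI)
    fix h assume h: "h \<notin> S'" "h \<noteq> F" "2*h \<noteq> F"
    show "F - h \<in> S'"
    proof (cases "h = m")
      case True then show ?thesis by (simp add: S'_def)
    next
      case False
      then have hS: "h \<notin> S" "h \<noteq> F - m" using h by (auto simp: S'_def)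
      have hF: "h \<le> F" using gapF[OF gt hS(1)] .
      have "F - h \<in> S" using sy hS h by blast
      moreover have "F - h \<noteq> m" using hS(2) hF by auto
      ultimately show ?thesis by (simp add: S'_def)
    qed
  qed
  have good': "good F S'" using cl' z' FS' gt' sy' by (simp add: good_def)
  have gtS': "\<forall>i>F. i \<in> S'" using gt' .
  have "m < msg S'"
  proof -
    have a: "msg S' \<in> S'" "0 < msg S'" using msg_props[OF gtS'] by auto
    show ?thesis
    proof (cases "msg S' = F - m")
      case True then show ?thesis using m2 by linarith
    next
      case False
      then have "msg S' \<in> S - {m}" using a by (simp add: S'_def)
      then show ?thesis using pos a(2) by fastforce
    qed
  qed
  then show ?thesis using good' by simp
qed

lemma lemB:
  assumes g: "good F S" and F0: "0 < F" and n2: "\<not> 2 * msg S < F"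
  shows "S = root F"
proof -
  have gt: "\<forall>i>F. i \<in> S" and z: "0 \<in> S" and cl: "\<forall>a\<in>S. \<forall>b\<in>S. a + b \<in> S"
    and FS: "F \<notin> S" and sy: "\<forall>h. h \<notin> S \<longrightarrow> h \<noteq> F \<longrightarrow> 2*h \<noteq> F \<longrightarrow> F - h \<in> S"
    using g by (auto simp: good_def)
  define m where "m = msg S"
  have m0: "0 < m" and mS: "m \<in> S" and mmin: "\<And>i. 0 < i \<Longrightarrow> i \<in> S \<Longrightarrow> m \<le> i" and mF: "m \<le> F+1"
    using msg_props[OF gt] m_def by auto
  have below: "i \<notin> S" if "0 < i" "i < m" for i using mmin[OF that(1)] that(2) by (meson not_le)
  have "2*m \<noteq> F"
  proof
    assume "2*m = F"
    then have "m + m = F" by simp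
    moreover have "m + m \<in> S" using cl mS by blast
    ultimately show False using FS by simp
  qed
  then have m2: "F < 2*m" using n2 m_def by linarith
  have above: "i \<in> S" if "m \<le> i" "i \<noteq> F" for i
  proof (rule ccontr)
    assume iS: "i \<notin> S"
    have "2*i \<noteq> F" using m2 that by linarith
    then have "F - i \<in> S" using sy iS that by blast
    moreover have "i < F" using gapF[OF gt iS] that by simp
    ultimately have "m \<le> F - i" using mmin by simp
    then show False using m2 that by linarith
  qed
  have mc: "m = (F+2) div 2 \<or> (m = (F+2) div 2 + 1 \<and> (F+2) div 2 = F)"
  proof (cases "m \<le> F")
    case True
    have "m \<noteq> 1"
    proof
      assume "m = 1"
      then have "F = 1" using m2 F0 by linarith
      then show False using mS FS \<open>m = 1\<close> by simp
    qed
    then have m2': "m \<ge> 2" using m0 by linarith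
    have hg: "m - 1 \<notin> S" using below[of "m - 1"] m2' by simp
    have "m - 1 \<noteq> F" using True m0 by linarith
    show ?thesis
    proof (cases "2*(m-1) = F")
      case True then show ?thesis using m2' by presburger
    next
      case False
      then have "F - (m-1) \<in> S" using sy hg \<open>m - 1 \<noteq> F\<close> by blast
      moreover have "0 < F - (m - 1)" using True m2' by linarith
      ultimately have "m \<le> F - (m - 1)" using mmin by blast
      then show ?thesis using m2 m2' by presburger
    qed
  next
    case False
    then have mF1: "m = F + 1" using mF by simp
    have "F \<le> 2"
    proof (rule ccontr)
      assume "\<not> F \<le> 2"
      have "1 \<notin> S" using below[of 1] mF1 F0 by simp
      moreover have "1 \<noteq> F" "2*1 \<noteq> F" using \<open>\<not> F \<le> 2\<close> by auto
      ultimately have "F - 1 \<in> S" using sy by blast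
      moreover have "0 < F - 1" "F - 1 < m" using \<open>\<not> F \<le> 2\<close> mF1 by auto
      ultimately show False using below by blast
    qed
    then have "F = 1 \<or> F = 2" using F0 by linarith
    then show ?thesis using mF1 by auto
  qed
  define c where "c = (F+2) div 2"
  have mc': "m = c \<or> (m = c + 1 \<and> c = F)" using mc c_def by simp
  have R: "\<And>i. i \<in> root F \<longleftrightarrow> i = 0 \<or> (c \<le> i \<and> i \<noteq> F)" by (simp add: root_def c_def)
  show ?thesis
  proof (rule set_eqI)
    fix i
    show "i \<in> S \<longleftrightarrow> i \<in> root F"
    proof (cases "i = 0")
      case True then show ?thesis using z R by simp
    next
      case i0: False
      show ?thesis
      proof (cases "i < m")
        case True
        have "i \<notin> S" using below[of i] i0 True by simp
        moreover have "\<not> (c \<le> i \<and> i \<noteq> F)" using mc' True by linarith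
        ultimately show ?thesis using R i0 by simp
      next
        case False
        show ?thesis
        proof (cases "i = F")
          case True then show ?thesis using FS R i0 by simp
        next
          case iF: False
          have "i \<in> S" using above[of i] False iF by simp
          moreover have "c \<le> i" using mc' False by linarith
          ultimately show ?thesis using R iF by simp
        qed
      qed
    qed
  qed
qed

lemma vmove_chi:
  assumes "m \<in> S" "n \<notin> S" "m \<noteq> n" "1 \<le> m" "m \<le> F" "1 \<le> n" "n \<le> F"
  shows "vmove (chi F S) m n = chi F (insert n (S - {m}))"
proof
  fix i
  show "vmove (chi F S) m n i = chi F (insert n (S - {m})) i"
    using assms by (auto simp: vmove_def unitv_def chi_def)
qed

lemma vmove_back: "vmove (vmove x a b) b a = x"
  by (auto simp: vmove_def unitv_def)

lemma verts: "0 < F \<Longrightarrow> GK_vertices F = chi F ` {S. good F S}"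
proof -
  assume F0: "0 < F"
  have "(\<lambda>S. kunz S (F + 1)) ` Irr F = (\<lambda>S. chi F S) ` {S. good F S}"
  proof (rule image_cong)
    show "Irr F = {S. good F S}" using Irr_iff[OF F0] by blast
    fix S assume "S \<in> {S. good F S}"
    then show "kunz S (F+1) = chi F S" using kunz_chi by (simp add: good_def)
  qed
  then show ?thesis by (simp add: GK_vertices_def)
qed

lemma edge_iff:
  assumes F0: "0 < F" and gS: "good F S" and gT: "good F T"
  shows "(chi F S, chi F T) \<in> GK_edges F \<longleftrightarrow> 2*msg S < F \<and> T = insert (F - msg S) (S - {msg S})"
proof -
  have gtS: "\<forall>i>F. i \<in> S" using gS by (simp add: good_def)
  have gtT: "\<forall>i>F. i \<in> T" using gT by (simp add: good_def)
  have V: "chi F S \<in> GK_vertices F" "chi F T \<in> GK_vertices F" using verts[OF F0] gS gT by auto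
  define m where "m = msg S"
  have m0: "1 \<le> m" and mS: "m \<in> S" using msg_props[OF gtS] m_def by auto
  have real_iff: "real m < real F / 2 \<longleftrightarrow> 2*m < F" by linarith
  show ?thesis
  proof
    assume e: "(chi F S, chi F T) \<in> GK_edges F"
    then have ez: "\<exists>i\<in>{1..F}. chi F S i = 0" by (simp add: GK_edges_def)
    then have mF: "m \<le> F" using ex_zero[OF gtS] m_def by simp
    have L: "(LEAST i. i \<in> {1..F} \<and> chi F S i = 0) = m" using least_zero[OF gtS] mF m_def by simp
    have e1: "let m' = (LEAST i. i \<in> {1..F} \<and> chi F S i = 0) in
        real m' < real F / 2 \<and> chi F T = vmove (chi F S) m' (F - m')"
      using e unfolding GK_edges_def by blast
    have e2: "real m < real F / 2" "chi F T = vmove (chi F S) m (F - m)"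
      using e1 unfolding L Let_def by auto
    then have m2: "2*m < F" using real_iff by simp
    have nS: "F - m \<notin> S"
    proof
      assume "F - m \<in> S"
      then have "m + (F - m) \<in> S" using gS mS by (simp add: good_def)
      then show False using gS mF by (simp add: good_def)
    qed
    have "chi F T = chi F (insert (F - m) (S - {m}))"
      using e2(2) vmove_chi[OF mS nS] m0 m2 by simp
    moreover have "0 \<in> T" "0 \<in> insert (F - m) (S - {m})" using gT gS m0 by (auto simp: good_def)
    moreover have "\<forall>i>F. i \<in> insert (F - m) (S - {m})" using gtS m2 by auto
    ultimately have "T = insert (F - m) (S - {m})" using chi_inj[of T "insert (F - m) (S - {m})" F] gtT by blast
    then show "2*msg S < F \<and> T = insert (F - msg S) (S - {msg S})" using m2 m_def by simp
  next
    assume a: "2*msg S < F \<and> T = insert (F - msg S) (S - {msg S})"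
    then have m2: "2*m < F" and Teq: "T = insert (F - m) (S - {m})" using m_def by auto
    have mF: "m \<le> F" using m2 by simp
    have ez: "\<exists>i\<in>{1..F}. chi F S i = 0" using ex_zero[OF gtS] mF m_def by simp
    have L: "(LEAST i. i \<in> {1..F} \<and> chi F S i = 0) = m" using least_zero[OF gtS] mF m_def by simp
    have nS: "F - m \<notin> S"
    proof
      assume "F - m \<in> S"
      then have "m + (F - m) \<in> S" using gS mS by (simp add: good_def)
      then show False using gS mF by (simp add: good_def)
    qed
    have "chi F T = vmove (chi F S) m (F - m)"
      using vmove_chi[OF mS nS] m0 m2 Teq by simp
    moreover have "real m < real F / 2" using real_iff m2 by simp
    ultimately have "let m' = (LEAST i. i \<in> {1..F} \<and> chi F S i = 0) in
        real m' < real F / 2 \<and> chi F T = vmove (chi F S) m' (F - m')"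
      unfolding L Let_def by blast
    then show "(chi F S, chi F T) \<in> GK_edges F"
      using V ez unfolding GK_edges_def by blast
  qed
qed




lemma lemC:
  assumes g: "good F S" and nS: "n \<in> S" and n2: "F < 2*n" and nF: "n < F"
    and pr: "\<And>k j. 0 < k \<Longrightarrow> 0 < j \<Longrightarrow> k + j = n \<Longrightarrow> k \<in> S \<Longrightarrow> j \<in> S \<Longrightarrow> False"
    and c4: "2*n - F \<notin> S" and c5: "3*n \<noteq> 2*F" and c6: "4*n \<noteq> 3*F"
    and c7: "F - n < msg S"
  defines "T \<equiv> insert (F - n) (S - {n})"
  shows "good F T \<and> msg T = F - n"
proof -
  have gt: "\<forall>i>F. i \<in> S" and z: "0 \<in> S" and cl: "\<forall>a\<in>S. \<forall>b\<in>S. a + b \<in> S"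
    and FS: "F \<notin> S" and sy: "\<forall>h. h \<notin> S \<longrightarrow> h \<noteq> F \<longrightarrow> 2*h \<noteq> F \<longrightarrow> F - h \<in> S"
    using g by (auto simp: good_def)
  define m where "m = F - n"
  have m0: "0 < m" and m2: "2*m < F" and nm: "n = F - m" "m + n = F" using nF n2 m_def by auto
  have mS: "m \<notin> S"
  proof
    assume "m \<in> S"
    then have "m + n \<in> S" using cl nS by blast
    then show False using nm FS by simp
  qed
  have big: "m < b" if "b \<in> S" "0 < b" for b
    using msg_props(4)[OF gt that(2,1)] c7 m_def by simp
  have Tdef: "T = insert m (S - {n})" by (simp add: T_def m_def)
  have one: "m + b \<in> T" if b: "b \<in> S - {n}" for b
  proof (cases "b = 0")
    case True then show ?thesis by (simp add: Tdef)
  next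
    case b0: False
    then have mb: "m < b" using big b by auto
    consider "F < m + b" | "m + b = F" | "m + b < F" by linarith
    then show ?thesis
    proof cases
      case 1 then show ?thesis using gt nF by (auto simp: Tdef)
    next
      case 2 then have "b = n" using nm by simp
      then show ?thesis using b by simp
    next
      case 3
      have ne: "m + b \<noteq> n"
      proof
        assume "m + b = n"
        then have "b = 2*n - F" using nm by simp
        then show False using c4 b by simp
      qed
      have "m + b \<in> S"
      proof (rule ccontr)
        assume nin: "m + b \<notin> S"
        show False
        proof (cases "2*(m+b) = F")
          case True
          then have "b + b = 2*n - F" using nm by simp
          moreover have "b + b \<in> S" using cl b by blast
          ultimately show False using c4 by simp
        next
          case False
          then have "F - (m + b) \<in> S" using sy nin 3 by simp
          moreover have "F - (m+b) + b = n" "0 < F - (m + b)" using 3 nm by auto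
          ultimately show False using pr[of "F - (m+b)" b] b b0 by auto
        qed
      qed
      then show ?thesis using ne by (simp add: Tdef)
    qed
  qed
  have cl': "a + b \<in> T" if ab: "a \<in> T" "b \<in> T" for a b
  proof (cases "a = m")
    case True
    show ?thesis
    proof (cases "b = m")
      case True
      have ne: "m + m \<noteq> n" using c5 nm(2) by presburger
      have "m + m \<in> S"
      proof (rule ccontr)
        assume nin: "m + m \<notin> S"
        have "2*(m+m) \<noteq> F" using c6 nm(2) by presburger
        moreover have "m + m \<noteq> F" using m2 by linarith
        ultimately have "F - (m+m) \<in> S" using sy nin by blast
        moreover have "F - (m+m) = 2*n - F" using nm by simp
        ultimately show False using c4 by simp
      qed
      then show ?thesis using ne \<open>a = m\<close> True by (simp add: Tdef)
    next
      case False
      then show ?thesis using one \<open>a = m\<close> ab by (auto simp: Tdef)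
    qed
  next
    case False
    show ?thesis
    proof (cases "b = m")
      case True then show ?thesis using one[of a] False ab by (auto simp: Tdef add.commute)
    next
      case bm: False
      then have ab': "a \<in> S - {n}" "b \<in> S - {n}" using ab False by (auto simp: Tdef)
      have "a + b \<in> S" using cl ab' by blast
      moreover have "a + b \<noteq> n"
      proof
        assume abn: "a + b = n"
        show False
        proof (cases "a = 0 \<or> b = 0")
          case True then show False using abn ab' by auto
        next
          case False then show False using pr[of a b] abn ab' by auto
        qed
      qed
      ultimately show ?thesis by (simp add: Tdef)
    qed
  qed
  have z': "0 \<in> T" using z n2 by (auto simp: Tdef)
  have FT: "F \<notin> T" using FS m2 by (auto simp: Tdef)
  have gt': "\<forall>i>F. i \<in> T" using gt nF by (auto simp: Tdef)
  have sy': "\<forall>h. h \<notin> T \<longrightarrow> h \<noteq> F \<longrightarrow> 2*h \<noteq> F \<longrightarrow> F - h \<in> T"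
  proof (intro allI impI)
    fix h assume h: "h \<notin> T" "h \<noteq> F" "2*h \<noteq> F"
    show "F - h \<in> T"
    proof (cases "h = n")
      case True then show ?thesis using nm by (simp add: Tdef)
    next
      case False
      then have hS: "h \<notin> S" "h \<noteq> m" using h by (auto simp: Tdef)
      have hF: "h \<le> F" using gapF[OF gt hS(1)] .
      have "F - h \<in> S" using sy hS h by blast
      moreover have "F - h \<noteq> n" using hS(2) hF nm by auto
      ultimately show ?thesis by (simp add: Tdef)
    qed
  qed
  have gT: "good F T" using cl' z' FT gt' sy' by (simp add: good_def)
  have "msg T = m"
    unfolding msg_def
  proof (rule Least_equality)
    show "0 < m \<and> m \<in> T" using m0 by (simp add: Tdef)
    fix y assume "0 < y \<and> y \<in> T"
    then have "y = m \<or> (y \<in> S \<and> 0 < y)" by (auto simp: Tdef)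
    then show "m \<le> y" using big by fastforce
  qed
  then show ?thesis using gT m_def by simp
qed

lemma vert_cases:
  assumes "0 < F" "v \<in> GK_vertices F"
  obtains S where "good F S" "v = chi F S"
  using assms verts by blast

lemma edge_fun: "(a,b) \<in> GK_edges F \<Longrightarrow> (a,c) \<in> GK_edges F \<Longrightarrow> b = c"
  unfolding GK_edges_def Let_def by auto

lemma tree_part:
  assumes F0: "0 < F"
  shows "is_tree_with_root (GK_vertices F) (GK_edges F) (xhat F)"
proof (rule tree_generic[where f="mx F" and B="F+1"])
  show rV: "xhat F \<in> GK_vertices F"
    using xhat_root[OF F0] root_good[OF F0] verts[OF F0] by auto
  show "GK_edges F \<subseteq> GK_vertices F \<times> GK_vertices F"
    unfolding GK_edges_def by auto
  show "\<And>a b c. (a, b) \<in> GK_edges F \<Longrightarrow> (a, c) \<in> GK_edges F \<Longrightarrow> b = c"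
    using edge_fun by metis
  show "(xhat F, b) \<notin> GK_edges F" for b
  proof
    assume e: "(xhat F, b) \<in> GK_edges F"
    then have "b \<in> GK_vertices F" unfolding GK_edges_def by auto
    then obtain T where gT: "good F T" and bT: "b = chi F T" using vert_cases[OF F0] by blast
    have "(chi F (root F), chi F T) \<in> GK_edges F" using e bT xhat_root[OF F0] by simp
    then have m2: "2 * msg (root F) < F" using edge_iff[OF F0 root_good[OF F0] gT] by simp
    have gtR: "\<forall>i>F. i \<in> root F" using root_good[OF F0] by (simp add: good_def)
    have "msg (root F) \<in> root F" "0 < msg (root F)" using msg_props[OF gtR] by auto
    then have "(F+2) div 2 \<le> msg (root F)" by (simp add: root_def)
    then show False using m2 by linarith
  qed
  show "mx F a < mx F b" if e: "(a, b) \<in> GK_edges F" for a b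
  proof -
    have "a \<in> GK_vertices F" "b \<in> GK_vertices F" using e unfolding GK_edges_def by auto
    then obtain S T where gS: "good F S" and aS: "a = chi F S" and gT: "good F T" and bT: "b = chi F T"
      using vert_cases[OF F0] by metis
    have "2*msg S < F \<and> T = insert (F - msg S) (S - {msg S})"
      using edge_iff[OF F0 gS gT] e aS bT by simp
    then have "msg S < msg T" using lemA[OF gS refl] by simp
    moreover have "mx F a = msg S" "mx F b = msg T"
      using aS bT mx_chi gS gT by (auto simp: good_def)
    ultimately show ?thesis by simp
  qed
  show "mx F a \<le> F + 1" for a by (rule mx_le)
  show "\<exists>w. (v, w) \<in> GK_edges F" if v: "v \<in> GK_vertices F" "v \<noteq> xhat F" for v
  proof -
    obtain S where gS: "good F S" and vS: "v = chi F S" using vert_cases[OF F0 v(1)] by blast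
    show ?thesis
    proof (cases "2 * msg S < F")
      case True
      define T where "T = insert (F - msg S) (S - {msg S})"
      have gT: "good F T" using lemA[OF gS refl True] T_def by simp
      have "(chi F S, chi F T) \<in> GK_edges F" using edge_iff[OF F0 gS gT] True T_def by simp
      then show ?thesis using vS by blast
    next
      case False
      then have "S = root F" using lemB[OF gS F0] by simp
      then show ?thesis using v vS xhat_root[OF F0] by simp
    qed
  qed
qed

lemma child_part:
  assumes F0: "0 < F" and gS: "good F S"
  defines "x \<equiv> chi F S"
  shows "{v. (v, x) \<in> GK_edges F} =
       {vmove x n (F - n) | n. n \<in> {1..F} \<and>
          x n = 0 \<and>
          (\<forall>k j. 0 < k \<and> 0 < j \<and> k + j = n \<longrightarrow> x k + x j \<ge> 1) \<and>
          real F / 2 < real n \<and> n < F \<and>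
          x (2 * n - F) = 1 \<and>
          3 * n \<noteq> 2 * F \<and>
          4 * n \<noteq> 3 * F \<and>
          int n > int F - int (mx F x)}" (is "?L = ?R")
proof -
  have gt: "\<forall>i>F. i \<in> S" and z: "0 \<in> S" and cl: "\<forall>a\<in>S. \<forall>b\<in>S. a + b \<in> S"
    and FS: "F \<notin> S"
    using gS by (auto simp: good_def)
  have chiv: "\<And>i. 1 \<le> i \<Longrightarrow> i \<le> F \<Longrightarrow> x i = (if i \<in> S then 0 else 1)"
    by (simp add: x_def chi_def)
  have mxS: "mx F x = msg S" using mx_chi[OF gt] x_def by simp
  show ?thesis
  proof (rule set_eqI, rule iffI)
    fix v assume "v \<in> ?L"
    then have e: "(v, x) \<in> GK_edges F" by simp
    then have "v \<in> GK_vertices F" unfolding GK_edges_def by auto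
    then obtain T where gT: "good F T" and vT: "v = chi F T" using vert_cases[OF F0] by blast
    have gtT: "\<forall>i>F. i \<in> T" and clT: "\<forall>a\<in>T. \<forall>b\<in>T. a + b \<in> T" and FT: "F \<notin> T"
      using gT by (auto simp: good_def)
    define m where "m = msg T"
    have ed: "2*m < F" and Seq: "S = insert (F - m) (T - {m})"
      using edge_iff[OF F0 gT gS] e vT x_def m_def by auto
    have m0: "0 < m" and mT: "m \<in> T" and mmin: "\<And>i. 0 < i \<Longrightarrow> i \<in> T \<Longrightarrow> m \<le> i"
      using msg_props[OF gtT] m_def by auto
    define n where "n = F - m"
    have nm: "m + n = F" "F - n = m" "n \<noteq> m" using ed n_def by auto
    have nT: "n \<notin> T"
    proof
      assume "n \<in> T"
      then have "m + n \<in> T" using clT mT by blast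
      then show False using nm FT by simp
    qed
    have nS: "n \<in> S" using Seq n_def by simp
    have x_eq: "x = vmove v m n"
      using vmove_chi[OF mT nT] nm m0 ed Seq vT x_def n_def by simp
    have v_eq: "v = vmove x n (F - n)" using x_eq vmove_back nm by simp
    have inT: "i \<in> T" if "i \<in> S" "i \<noteq> n" for i using that Seq n_def by auto
    have c1: "n \<in> {1..F}" using nm m0 ed by auto
    have c2: "x n = 0" using chiv[of n] c1 nS by simp
    have c3: "\<forall>k j. 0 < k \<and> 0 < j \<and> k + j = n \<longrightarrow> x k + x j \<ge> 1"
    proof (intro allI impI)
      fix k j assume kj: "0 < k \<and> 0 < j \<and> k + j = n"
      then have b: "1 \<le> k" "k \<le> F" "1 \<le> j" "j \<le> F" "k \<noteq> n" "j \<noteq> n" using c1 by auto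
      show "x k + x j \<ge> 1"
      proof (rule ccontr)
        assume "\<not> x k + x j \<ge> 1"
        then have "k \<in> S" "j \<in> S" using chiv[of k] chiv[of j] b by (auto split: if_splits)
        then have "k \<in> T" "j \<in> T" using inT b by auto
        then have "k + j \<in> T" using clT by blast
        then show False using kj nT by simp
      qed
    qed
    have c4: "real F / 2 < real n" using ed nm by linarith
    have c5: "n < F" using m0 nm by linarith
    have c6: "x (2 * n - F) = 1"
    proof -
      have r: "1 \<le> 2*n - F" "2*n - F \<le> F" "2*n - F = F - 2*m" using nm ed by auto
      have "2*n - F \<notin> S"
      proof
        assume a: "2*n - F \<in> S"
        have "2*n - F \<noteq> n" using r c5 by linarith
        then have "2*n - F \<in> T" using inT a by simp
        then have "(2*n - F) + m \<in> T" using clT mT by blast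
        moreover have "(2*n - F) + m = n" using nm ed r by linarith
        ultimately show False using nT by simp
      qed
      then show ?thesis using chiv[of "2*n - F"] r by simp
    qed
    have c7: "3 * n \<noteq> 2 * F"
    proof
      assume "3*n = 2*F"
      then have "n = m + m" using nm by linarith
      moreover have "m + m \<in> T" using clT mT by blast
      ultimately show False using nT by simp
    qed
    have c8: "4 * n \<noteq> 3 * F"
    proof
      assume "4*n = 3*F"
      then have "n = m + m + m" using nm by linarith
      moreover have "m + m + m \<in> T" using clT mT by blast
      ultimately show False using nT by simp
    qed
    have c9: "int n > int F - int (mx F x)"
    proof -
      have a: "msg S \<in> S" "0 < msg S" using msg_props[OF gt] by auto
      have "m < msg S"
      proof (cases "msg S = n")
        case True then show ?thesis using nm ed by linarith
      next
        case False
        have mnS: "m \<notin> S" using Seq nm(3) n_def by simp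
        have i1: "msg S \<in> T" using inT[OF a(1) False] .
        have i2: "msg S \<noteq> m" using a(1) mnS by metis
        have "m \<le> msg S" using mmin[OF a(2) i1] .
        then show ?thesis using i2 by simp
      qed
      then have "int m < int (mx F x)" using mxS by simp
      then show ?thesis using nm(1) by linarith
    qed
    show "v \<in> ?R"
      unfolding mem_Collect_eq
      by (rule exI[of _ n], intro conjI v_eq c1 c2 c3 c4 c5 c6 c7 c8 c9)
  next
    fix v assume "v \<in> ?R"
    then obtain n where v: "v = vmove x n (F - n)" and c1: "n \<in> {1..F}" and c2: "x n = 0"
      and c3: "\<forall>k j. 0 < k \<and> 0 < j \<and> k + j = n \<longrightarrow> x k + x j \<ge> 1"
      and c4: "real F / 2 < real n" and c5: "n < F" and c6: "x (2 * n - F) = 1"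
      and c7: "3 * n \<noteq> 2 * F" and c8: "4 * n \<noteq> 3 * F" and c9: "int n > int F - int (mx F x)"
      by blast
    have nS: "n \<in> S" using chiv[of n] c1 c2 by (auto split: if_splits)
    have n2: "F < 2*n" using c4 by linarith
    have pr: "False" if "0 < k" "0 < j" "k + j = n" "k \<in> S" "j \<in> S" for k j
    proof -
      have "x k = 0" "x j = 0" using chiv[of k] chiv[of j] that c1 by auto
      then show False using c3 that by force
    qed
    have c4': "2*n - F \<notin> S"
    proof
      assume "2*n - F \<in> S"
      moreover have "1 \<le> 2*n - F" "2*n - F \<le> F" using n2 c5 by auto
      ultimately have "x (2*n - F) = 0" using chiv by simp
      then show False using c6 by simp
    qed
    have c7': "F - n < msg S" using c9 mxS c5 by linarith
    define m where "m = F - n"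
    define T where "T = insert (F - n) (S - {n})"
    have C: "good F T \<and> msg T = F - n"
      using lemC[OF gS nS n2 c5 pr c4' c7 c8 c7'] T_def by simp
    have mS: "m \<notin> S"
    proof
      assume "m \<in> S"
      then have "n + m \<in> S" using cl nS by blast
      then show False using FS m_def c5 by simp
    qed
    have vT: "v = chi F T"
      using v vmove_chi[OF nS mS] c1 c5 n2 m_def T_def x_def by auto
    have "insert (F - msg T) (T - {msg T}) = S"
      using C mS nS c5 unfolding T_def m_def by auto
    then have "(chi F T, chi F S) \<in> GK_edges F"
      using edge_iff[OF F0 _ gS, of T] C n2 c5 by auto
    then show "v \<in> ?L" using vT x_def by simp
  qed
qed

theorem theorem15:
  fixes F :: nat
  assumes "0 < F"
  shows "is_tree_with_root (GK_vertices F) (GK_edges F) (xhat F) \<and>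
    (\<forall>S\<in>Irr F. let x = kunz S (F + 1) in
       {v. (v, x) \<in> GK_edges F} =
       {vmove x n (F - n) | n. n \<in> {1..F} \<and>
          x n = 0 \<and>
          (\<forall>k j. 0 < k \<and> 0 < j \<and> k + j = n \<longrightarrow> x k + x j \<ge> 1) \<and>
          real F / 2 < real n \<and> n < F \<and>
          x (2 * n - F) = 1 \<and>
          3 * n \<noteq> 2 * F \<and>
          4 * n \<noteq> 3 * F \<and>
          int n > int F - int (mx F x)})"
proof
  show "is_tree_with_root (GK_vertices F) (GK_edges F) (xhat F)" using tree_part[OF assms] .
  show "\<forall>S\<in>Irr F. let x = kunz S (F + 1) in
       {v. (v, x) \<in> GK_edges F} =
       {vmove x n (F - n) | n. n \<in> {1..F} \<and>
          x n = 0 \<and>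
          (\<forall>k j. 0 < k \<and> 0 < j \<and> k + j = n \<longrightarrow> x k + x j \<ge> 1) \<and>
          real F / 2 < real n \<and> n < F \<and>
          x (2 * n - F) = 1 \<and>
          3 * n \<noteq> 2 * F \<and>
          4 * n \<noteq> 3 * F \<and>
          int n > int F - int (mx F x)}"
  proof
    fix S assume "S \<in> Irr F"
    then have gS: "good F S" using Irr_iff[OF assms] by simp
    have "kunz S (F+1) = chi F S" using kunz_chi gS by (simp add: good_def)
    then show "let x = kunz S (F + 1) in
       {v. (v, x) \<in> GK_edges F} =
       {vmove x n (F - n) | n. n \<in> {1..F} \<and>
          x n = 0 \<and>
          (\<forall>k j. 0 < k \<and> 0 < j \<and> k + j = n \<longrightarrow> x k + x j \<ge> 1) \<and>
          real F / 2 < real n \<and> n < F \<and>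
          x (2 * n - F) = 1 \<and>
          3 * n \<noteq> 2 * F \<and>
          4 * n \<noteq> 3 * F \<and>
          int n > int F - int (mx F x)}"
      using child_part[OF assms gS] by (simp add: Let_def)
  qed
qed


end
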